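(* For any $X\in T^1(\Sigma)$ the following are equivalent: (i) $X$ is an idempotent tree (its start vertex equals its end vertex); (ii) $X$ is idempotent under pruned multiplication, i.e. $XX=X$; (iii) $X=X^+$; (iv) $X=Y^+$ for some $Y\in T^1(\Sigma)$; (v) $X=X^*$; (vi) $X=Y^*$ for some $Y\in T^1(\Sigma)$.
   Context: Let $\Sigma$ be a set. A $\Sigma$-tree is a finite directed graph whose underlying undirected graph is a tree, edges labelled by elements of $\Sigma$, with distinguished start and end vertices such that there is a (possibly empty) directed path from start to end vertex. A morphism $X\to Y$ maps vertices to vertices and edges to edges, preserving initial vertex, terminal vertex and label of each edge, and mapping start/end vertex to start/end vertex; isomorphisms are morphisms bijective on vertices and edges. A retraction is an idempotent morphism $X\to X$, its image a retract; $X$ is pruned if it admits no non-identity retraction. Every tree $X$ has a pruned retract, unique up to isomorphism, whose isomorphism type is $\overline{X}$. $T^1(\Sigma)$ is the set of isomorphism types of pruned $\Sigma$-trees. Unpruned operations: $X\times Y$ identifies the end vertex of (a copy of) $X$ with the start vertex of (a disjoint copy of) $Y$, start vertex that of $X$, end vertex that of $Y$; $X^{(+)}$ is $X$ with end vertex moved to the start vertex; $X^{( * )}$ is $X$ with start vertex moved to the end vertex. Pruned operations: $XY=\overline{X\times Y}$, $X^+=\overline{X^{(+)}}$, $X^*=\overline{X^{( * )}}$. *)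

theory Defs
  imports Main
begin

record ('v, 'e, 's) stree =
  verts :: "'v set"
  edges :: "'e set"
  src :: "'e \<Rightarrow> 'v"
  tgt :: "'e \<Rightarrow> 'v"
  lab :: "'e \<Rightarrow> 's"
  st :: 'v
  en :: 'v

definition undir_adj :: "('v, 'e, 's) stree \<Rightarrow> ('v \<times> 'v) set" where
  "undir_adj X = {(src X e, tgt X e) | e. e \<in> edges X} \<union> {(tgt X e, src X e) | e. e \<in> edges X}"

definition dir_adj :: "('v, 'e, 's) stree \<Rightarrow> ('v \<times> 'v) set" where
  "dir_adj X = {(src X e, tgt X e) | e. e \<in> edges X}"

text \<open>Underlying undirected graph is a (finite) tree: nonempty, connected, |E| = |V| - 1
  (this excludes cycles, loops and multiple edges).\<close>
definition is_tree :: "('v, 'e, 's) stree \<Rightarrow> bool" where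
  "is_tree X \<longleftrightarrow> finite (verts X) \<and> finite (edges X) \<and> verts X \<noteq> {}
     \<and> (\<forall>e\<in>edges X. src X e \<in> verts X \<and> tgt X e \<in> verts X)
     \<and> (\<forall>u\<in>verts X. \<forall>v\<in>verts X. (u, v) \<in> (undir_adj X)\<^sup>*)
     \<and> card (edges X) + 1 = card (verts X)
     \<and> st X \<in> verts X \<and> en X \<in> verts X
     \<and> (st X, en X) \<in> (dir_adj X)\<^sup>*"

definition morphism :: "('v, 'e, 's) stree \<Rightarrow> ('w, 'f, 's) stree \<Rightarrow> ('v \<Rightarrow> 'w) \<Rightarrow> ('e \<Rightarrow> 'f) \<Rightarrow> bool" where
  "morphism X Y f g \<longleftrightarrow> f ` verts X \<subseteq> verts Y \<and> g ` edges X \<subseteq> edges Y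
     \<and> (\<forall>e\<in>edges X. src Y (g e) = f (src X e) \<and> tgt Y (g e) = f (tgt X e) \<and> lab Y (g e) = lab X e)
     \<and> f (st X) = st Y \<and> f (en X) = en Y"

definition isomorphic :: "('v, 'e, 's) stree \<Rightarrow> ('w, 'f, 's) stree \<Rightarrow> bool" where
  "isomorphic X Y \<longleftrightarrow> (\<exists>f g. morphism X Y f g \<and> bij_betw f (verts X) (verts Y) \<and> bij_betw g (edges X) (edges Y))"

definition retraction :: "('v, 'e, 's) stree \<Rightarrow> ('v \<Rightarrow> 'v) \<Rightarrow> ('e \<Rightarrow> 'e) \<Rightarrow> bool" where
  "retraction X f g \<longleftrightarrow> morphism X X f g
     \<and> (\<forall>v\<in>verts X. f (f v) = f v) \<and> (\<forall>e\<in>edges X. g (g e) = g e)"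

definition retract :: "('v, 'e, 's) stree \<Rightarrow> ('v \<Rightarrow> 'v) \<Rightarrow> ('e \<Rightarrow> 'e) \<Rightarrow> ('v, 'e, 's) stree" where
  "retract X f g = X\<lparr>verts := f ` verts X, edges := g ` edges X\<rparr>"

definition pruned :: "('v, 'e, 's) stree \<Rightarrow> bool" where
  "pruned X \<longleftrightarrow> (\<forall>f g. retraction X f g \<longrightarrow>
      (\<forall>v\<in>verts X. f v = v) \<and> (\<forall>e\<in>edges X. g e = e))"

text \<open>Element of T^1(Sigma): a pruned Sigma-tree (taken up to isomorphism).\<close>
definition T1 :: "('v, 'e, 's) stree \<Rightarrow> bool" where
  "T1 X \<longleftrightarrow> is_tree X \<and> pruned X"

text \<open>\<open>prune_is W Z\<close>: Z represents the isomorphism type of the pruned retract of W,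
  i.e. (overline W) = [Z].\<close>
definition prune_is :: "('v, 'e, 's) stree \<Rightarrow> ('w, 'f, 's) stree \<Rightarrow> bool" where
  "prune_is W Z \<longleftrightarrow> (\<exists>f g. retraction W f g \<and> pruned (retract W f g) \<and> isomorphic (retract W f g) Z)"

definition tmult :: "('v, 'e, 's) stree \<Rightarrow> ('v, 'e, 's) stree \<Rightarrow> ('v + 'v, 'e + 'e, 's) stree" where
  "tmult X Y = (let j = (\<lambda>v. if v = st Y then Inl (en X) else Inr v) in
     \<lparr> verts = Inl ` verts X \<union> Inr ` (verts Y - {st Y}),
       edges = Inl ` edges X \<union> Inr ` edges Y,
       src = case_sum (\<lambda>e. Inl (src X e)) (\<lambda>e. j (src Y e)),
       tgt = case_sum (\<lambda>e. Inl (tgt X e)) (\<lambda>e. j (tgt Y e)),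
       lab = case_sum (lab X) (lab Y),
       st = Inl (st X),
       en = j (en Y) \<rparr>)"

definition tplus :: "('v, 'e, 's) stree \<Rightarrow> ('v, 'e, 's) stree" where
  "tplus X = X\<lparr>en := st X\<rparr>"

definition tstar :: "('v, 'e, 's) stree \<Rightarrow> ('v, 'e, 's) stree" where
  "tstar X = X\<lparr>st := en X\<rparr>"

end

theory Submission
  imports Defs
begin


definition adjr :: "'e set \<Rightarrow> ('e\<Rightarrow>'v) \<Rightarrow> ('e\<Rightarrow>'v) \<Rightarrow> ('v\<times>'v) set" where
  "adjr E s t = {(s e, t e)|e. e\<in>E} \<union> {(t e, s e)|e. e\<in>E}"

definition gtree :: "'v set \<Rightarrow> 'e set \<Rightarrow> ('e\<Rightarrow>'v) \<Rightarrow> ('e\<Rightarrow>'v) \<Rightarrow> bool" where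
  "gtree V E s t \<longleftrightarrow> finite V \<and> finite E \<and> V \<noteq> {} \<and> (\<forall>e\<in>E. s e \<in> V \<and> t e \<in> V)
    \<and> (\<forall>u\<in>V. \<forall>w\<in>V. (u,w) \<in> (adjr E s t)\<^sup>*) \<and> card E + 1 = card V"

lemma sum_fib:
  assumes "finite V" "finite E" "\<forall>e\<in>E. s e \<in> V"
  shows "(\<Sum>v\<in>V. card {e\<in>E. s e = v}) = card E"
proof -
  have "E = (\<Union>v\<in>V. {e\<in>E. s e = v})" using assms by auto
  moreover have "card (\<Union>v\<in>V. {e\<in>E. s e = v}) = (\<Sum>v\<in>V. card {e\<in>E. s e = v})"
    by (rule card_UN_disjoint) (use assms in auto)
  ultimately show ?thesis by simp
qed

lemma leaf_conn:
  assumes conn: "(u,w) \<in> (adjr E s t)\<^sup>*" and uv: "u \<noteq> v"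
    and I: "{e\<in>E. s e = v \<or> t e = v} = {e0}" and x: "{s e0, t e0} = {v, x}" and xv: "x \<noteq> v"
  shows "(w \<noteq> v \<and> (u,w) \<in> (adjr (E - {e0}) s t)\<^sup>*) \<or> (w = v \<and> (u,x) \<in> (adjr (E - {e0}) s t)\<^sup>*)"
  using conn
proof (induction rule: rtrancl_induct)
  case base
  then show ?case using uv by simp
next
  case (step w w2)
  from step.hyps(2) obtain e where e: "e \<in> E" "(w = s e \<and> w2 = t e) \<or> (w = t e \<and> w2 = s e)"
    unfolding adjr_def by auto
  have e0E: "e0 \<in> E" using I by auto
  show ?case
  proof (cases "w = v")
    case True
    then have "e = e0" using I e by auto
    then have "w2 = x" using e True x xv by auto
    then show ?thesis using step.IH True xv by auto
  next
    case False
    with step.IH have r: "(u,w) \<in> (adjr (E - {e0}) s t)\<^sup>*" by auto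
    show ?thesis
    proof (cases "e = e0")
      case True
      then have "w = x" "w2 = v" using e x False xv by (auto simp: doubleton_eq_iff)
      then show ?thesis using r by auto
    next
      case ne: False
      then have "s e \<noteq> v" "t e \<noteq> v" using I e by auto
      then have "w2 \<noteq> v" using e by auto
      moreover have "(w,w2) \<in> adjr (E - {e0}) s t" using e ne unfolding adjr_def by auto
      ultimately show ?thesis using r by auto
    qed
  qed
qed

lemma potential:
  "gtree V E s t \<Longrightarrow> \<exists>h::'v\<Rightarrow>int. \<forall>e\<in>E. h (t e) = h (s e) + 1"
proof (induction "card V" arbitrary: V E rule: less_induct)
  case less
  note G = less.prems[unfolded gtree_def]
  show ?case
  proof (cases "card V = 1")
    case True
    then have "E = {}" using G by auto
    then show ?thesis by auto
  next
    case False
    have cV: "card V \<ge> 2" using G False by (metis Suc_1 Suc_leI card_gt_0_iff le_neq_implies_less less_one not_less)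
    define deg where "deg v = card {e\<in>E. s e = v} + card {e\<in>E. t e = v}" for v
    have "(\<Sum>v\<in>V. deg v) = 2 * card E"
      unfolding deg_def sum.distrib using sum_fib[of V E s] sum_fib[of V E t] G by simp
    then have sd: "(\<Sum>v\<in>V. deg v) < (\<Sum>v\<in>V. 2)" using G by simp
    obtain v where vV: "v \<in> V" and dv: "deg v < 2"
    proof (rule ccontr)
      assume "\<not> thesis"
      then have "\<forall>v\<in>V. 2 \<le> deg v" using that by force
      then have "(\<Sum>v\<in>V. (2::nat)) \<le> (\<Sum>v\<in>V. deg v)" by (intro sum_mono) auto
      then show False using sd by simp
    qed
    obtain w where wV: "w \<in> V" and wv: "w \<noteq> v"
    proof -
      have "V - {v} \<noteq> {}" using cV vV G by (metis Diff_empty Diff_insert0 One_nat_def card.remove card_Diff_singleton_if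
          insert_Diff le_antisym less_Suc_eq_le nat_le_linear not_less_eq_eq numeral_2_eq_2 card.empty)
      then show ?thesis using that by auto
    qed
    have "(v,w) \<in> (adjr E s t)\<^sup>*" using G vV wV by auto
    then obtain y where "(v,y) \<in> adjr E s t" using wv by (metis converse_rtranclE)
    then obtain e1 where e1: "e1 \<in> E" "s e1 = v \<or> t e1 = v" unfolding adjr_def by auto
    have finS: "finite {e\<in>E. s e = v}" "finite {e\<in>E. t e = v}" using G by auto
    have "deg v = 1"
    proof -
      have "{e\<in>E. s e = v} \<noteq> {} \<or> {e\<in>E. t e = v} \<noteq> {}" using e1 by auto
      then have "deg v \<noteq> 0" unfolding deg_def using finS by auto
      then show ?thesis using dv by simp
    qed
    then obtain e0 where I: "{e\<in>E. s e = v \<or> t e = v} = {e0}" and nl: "s e0 \<noteq> t e0"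
    proof -
      have "(card {e\<in>E. s e = v} = 1 \<and> {e\<in>E. t e = v} = {}) \<or> (card {e\<in>E. t e = v} = 1 \<and> {e\<in>E. s e = v} = {})"
        using \<open>deg v = 1\<close> finS unfolding deg_def by (auto simp: add_is_1)
      then show ?thesis
      proof
        assume a: "card {e\<in>E. s e = v} = 1 \<and> {e\<in>E. t e = v} = {}"
        then obtain e0 where e0: "{e\<in>E. s e = v} = {e0}" by (auto simp: card_1_singleton_iff)
        then have "e0 \<in> E" "s e0 = v" by auto
        then have "t e0 \<noteq> v" using a by auto
        have "{e\<in>E. s e = v \<or> t e = v} = {e0}" using a e0 by auto
        moreover have "s e0 \<noteq> t e0" using \<open>s e0 = v\<close> \<open>t e0 \<noteq> v\<close> by auto
        ultimately show ?thesis using that by blast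
      next
        assume a: "card {e\<in>E. t e = v} = 1 \<and> {e\<in>E. s e = v} = {}"
        then obtain e0 where e0: "{e\<in>E. t e = v} = {e0}" by (auto simp: card_1_singleton_iff)
        then have "e0 \<in> E" "t e0 = v" by auto
        then have "s e0 \<noteq> v" using a by auto
        have "{e\<in>E. s e = v \<or> t e = v} = {e0}" using a e0 by auto
        moreover have "s e0 \<noteq> t e0" using \<open>t e0 = v\<close> \<open>s e0 \<noteq> v\<close> by auto
        ultimately show ?thesis using that by blast
      qed
    qed
    have e0E: "e0 \<in> E" and e0v: "s e0 = v \<or> t e0 = v" using I by auto
    define x where "x = (if s e0 = v then t e0 else s e0)"
    have xv: "x \<noteq> v" and xe: "{s e0, t e0} = {v, x}" using nl e0v unfolding x_def by auto
    have xV: "x \<in> V" using G e0E unfolding x_def by auto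
    define V' where "V' = V - {v}"
    define E' where "E' = E - {e0}"
    have g': "gtree V' E' s t"
      unfolding gtree_def
    proof (intro conjI)
      show "finite V'" "finite E'" using G unfolding V'_def E'_def by auto
      show "V' \<noteq> {}" using xV xv unfolding V'_def by auto
      show "\<forall>e\<in>E'. s e \<in> V' \<and> t e \<in> V'"
      proof
        fix e assume "e \<in> E'"
        then have "e \<in> E" "e \<noteq> e0" unfolding E'_def by auto
        then have "s e \<noteq> v" "t e \<noteq> v" using I by auto
        then show "s e \<in> V' \<and> t e \<in> V'" using G \<open>e \<in> E\<close> unfolding V'_def by auto
      qed
      show "\<forall>u\<in>V'. \<forall>w\<in>V'. (u, w) \<in> (adjr E' s t)\<^sup>*"
      proof (intro ballI)
        fix u w assume "u \<in> V'" "w \<in> V'"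
        then have "(u,w) \<in> (adjr E s t)\<^sup>*" "u \<noteq> v" "w \<noteq> v" using G unfolding V'_def by auto
        then show "(u, w) \<in> (adjr E' s t)\<^sup>*" using leaf_conn[OF _ _ I xe xv] unfolding E'_def by blast
      qed
      have ce: "card E + 1 = card V" using G by simp
      show "card E' + 1 = card V'" using G e0E vV cV ce unfolding E'_def V'_def
        by (simp add: card_Diff_singleton)
    qed
    have "card V' < card V" using G vV unfolding V'_def by (simp add: card_Diff1_less)
    then obtain h :: "'v \<Rightarrow> int" where h: "\<forall>e\<in>E'. h (t e) = h (s e) + 1" using less.hyps[OF _ g'] by blast
    define h' where "h' = h(v := (if s e0 = v then h x - 1 else h x + 1))"
    have "\<forall>e\<in>E. h' (t e) = h' (s e) + 1"
    proof
      fix e assume eE: "e \<in> E"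
      show "h' (t e) = h' (s e) + 1"
      proof (cases "e = e0")
        case True
        then show ?thesis using nl xv e0v unfolding h'_def x_def by auto
      next
        case False
        then have "s e \<noteq> v" "t e \<noteq> v" "e \<in> E'" using I eE unfolding E'_def by auto
        then show ?thesis using h unfolding h'_def by auto
      qed
    qed
    then show ?thesis by blast
  qed
qed


lemma tree_potential:
  assumes "is_tree X"
  shows "\<exists>h::'v\<Rightarrow>int. \<forall>e\<in>edges X. h (tgt X e) = h (src X e) + 1"
proof -
  have "undir_adj X = adjr (edges X) (src X) (tgt X)" unfolding undir_adj_def adjr_def by simp
  then have "gtree (verts X) (edges X) (src X) (tgt X)"
    using assms unfolding is_tree_def gtree_def by simp
  then show ?thesis by (rule potential)
qed

inductive dw :: "('v,'e,'s) stree \<Rightarrow> 'v \<Rightarrow> nat \<Rightarrow> 'v \<Rightarrow> bool" for X where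
  dw0: "dw X u 0 u"
| dwS: "e \<in> edges X \<Longrightarrow> dw X (tgt X e) n w \<Longrightarrow> dw X (src X e) (Suc n) w"

lemma dw_rtr: "(u,v) \<in> (dir_adj X)\<^sup>* \<Longrightarrow> \<exists>n. dw X u n v"
proof (induction rule: converse_rtrancl_induct)
  case base
  show ?case by (rule exI[of _ 0]) (rule dw.dw0)
next
  case (step y z)
  then obtain e where e: "e \<in> edges X" "y = src X e" "z = tgt X e" unfolding dir_adj_def by auto
  from step.IH obtain n where "dw X z n v" by blast
  then have "dw X y (Suc n) v" using dwS[of e X n v] e by simp
  then show ?case by blast
qed

lemma dw_pot: "dw X u n v \<Longrightarrow> \<forall>e\<in>edges X. h (tgt X e) = h (src X e) + (1::int) \<Longrightarrow> h v = h u + int n"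
  by (induction rule: dw.induct) auto

lemma dw_morph: assumes mm: "morphism X Y f g" shows "dw X u n v \<Longrightarrow> dw Y (f u) n (f v)"
proof (induction rule: dw.induct)
  case (dw0 u)
  then show ?case by (rule dw.dw0)
next
  case (dwS e n w)
  have "g e \<in> edges Y" "src Y (g e) = f (src X e)" "tgt Y (g e) = f (tgt X e)"
    using dwS mm unfolding morphism_def by auto
  then show ?case using dw.dwS[of "g e" Y n "f w"] dwS by simp
qed

lemma dw_app: "dw X u n v \<Longrightarrow> dw X v m w \<Longrightarrow> dw X u (n+m) w"
  by (induction rule: dw.induct) (auto intro: dw.intros)

lemma dw_zero: "dw X u 0 v \<Longrightarrow> u = v"
  by (auto elim: dw.cases)

lemma dw_inl: "dw X u n v \<Longrightarrow> dw (tmult X Y) (Inl u) n (Inl v)"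
proof (induction rule: dw.induct)
  case (dw0 u)
  then show ?case by (rule dw.dw0)
next
  case (dwS e n w)
  have "Inl e \<in> edges (tmult X Y)" "src (tmult X Y) (Inl e) = Inl (src X e)"
     "tgt (tmult X Y) (Inl e) = Inl (tgt X e)" using dwS unfolding tmult_def Let_def by auto
  then show ?case using dw.dwS[of "Inl e" "tmult X Y"] dwS by metis
qed

lemma dw_inr: "dw Y u n v \<Longrightarrow> dw (tmult X Y) (if u = st Y then Inl (en X) else Inr u) n (if v = st Y then Inl (en X) else Inr v)"
proof (induction rule: dw.induct)
  case (dw0 u)
  then show ?case by (rule dw.dw0)
next
  case (dwS e n w)
  have "Inr e \<in> edges (tmult X Y)" "src (tmult X Y) (Inr e) = (if src Y e = st Y then Inl (en X) else Inr (src Y e))"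
     "tgt (tmult X Y) (Inr e) = (if tgt Y e = st Y then Inl (en X) else Inr (tgt Y e))" using dwS unfolding tmult_def Let_def by auto
  then have h: "Inr e \<in> edges (tmult X Y)" and h2: "src (tmult X Y) (Inr e) = (if src Y e = st Y then Inl (en X) else Inr (src Y e))"
    and h3: "tgt (tmult X Y) (Inr e) = (if tgt Y e = st Y then Inl (en X) else Inr (tgt Y e))" by blast+
  have "dw (tmult X Y) (tgt (tmult X Y) (Inr e)) n (if w = st Y then Inl (en X) else Inr w)"
    unfolding h3 by (rule dwS.IH)
  from dw.dwS[OF h this] show ?case unfolding h2 .
qed

lemma morphism_comp: "morphism A B f g \<Longrightarrow> morphism B C f' g' \<Longrightarrow> morphism A C (f' \<circ> f) (g' \<circ> g)"
  unfolding morphism_def by (auto simp: image_subset_iff)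

lemma retraction_morph: "retraction W f g \<Longrightarrow> morphism W (retract W f g) f g"
  unfolding retraction_def morphism_def retract_def by auto

lemma pruned_transfer:
  assumes pr: "pruned X" and m1: "morphism X R p q" and m2: "morphism R X p' q'"
    and i1: "\<forall>v\<in>verts R. p (p' v) = v" and i2: "\<forall>e\<in>edges R. q (q' e) = e"
  shows "pruned R"
  unfolding pruned_def
proof (intro allI impI)
  fix a b assume r: "retraction R a b"
  have ma: "morphism R R a b" using r unfolding retraction_def by simp
  have m: "morphism X X (p' \<circ> a \<circ> p) (q' \<circ> b \<circ> q)"
    using morphism_comp[OF morphism_comp[OF m1 ma] m2] by (simp add: comp_assoc)
  have pv: "p v \<in> verts R" if "v \<in> verts X" for v using m1 that unfolding morphism_def by auto
  have qe: "q e \<in> edges R" if "e \<in> edges X" for e using m1 that unfolding morphism_def by auto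
  have av: "a w \<in> verts R" if "w \<in> verts R" for w using ma that unfolding morphism_def by auto
  have be: "b w \<in> edges R" if "w \<in> edges R" for w using ma that unfolding morphism_def by auto
  have "retraction X (p' \<circ> a \<circ> p) (q' \<circ> b \<circ> q)"
    unfolding retraction_def
  proof (intro conjI ballI)
    show "morphism X X (p' \<circ> a \<circ> p) (q' \<circ> b \<circ> q)" by (rule m)
    fix v assume "v \<in> verts X"
    then show "(p' \<circ> a \<circ> p) ((p' \<circ> a \<circ> p) v) = (p' \<circ> a \<circ> p) v"
      using i1 pv av r unfolding retraction_def by simp
  next
    fix e assume "e \<in> edges X"
    then show "(q' \<circ> b \<circ> q) ((q' \<circ> b \<circ> q) e) = (q' \<circ> b \<circ> q) e"
      using i2 qe be r unfolding retraction_def by simp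
  qed
  then have "(\<forall>v\<in>verts X. (p' \<circ> a \<circ> p) v = v) \<and> (\<forall>e\<in>edges X. (q' \<circ> b \<circ> q) e = e)"
    using pr unfolding pruned_def by blast
  then have fx: "\<forall>v\<in>verts X. p' (a (p v)) = v" "\<forall>e\<in>edges X. q' (b (q e)) = e" by auto
  have p'v: "p' w \<in> verts X" if "w \<in> verts R" for w using m2 that unfolding morphism_def by auto
  have q'e: "q' w \<in> edges X" if "w \<in> edges R" for w using m2 that unfolding morphism_def by auto
  show "(\<forall>v\<in>verts R. a v = v) \<and> (\<forall>e\<in>edges R. b e = e)"
  proof (intro conjI ballI)
    fix w assume w: "w \<in> verts R"
    define v where "v = p' w"
    have v: "v \<in> verts X" "w = p v" using p'v[OF w] i1 w unfolding v_def by auto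
    have "a (p v) \<in> verts R" using av w v by simp
    then have "a (p v) = p (p' (a (p v)))" using i1 by simp
    also have "\<dots> = p v" using fx v by simp
    finally show "a w = w" using v by simp
  next
    fix w assume w: "w \<in> edges R"
    define v where "v = q' w"
    have v: "v \<in> edges X" "w = q v" using q'e[OF w] i2 w unfolding v_def by auto
    have "b (q v) \<in> edges R" using be w v by simp
    then have "b (q v) = q (q' (b (q v)))" using i2 by simp
    also have "\<dots> = q v" using fx v by simp
    finally show "b w = w" using v by simp
  qed
qed

lemma prune_st_en:
  assumes "prune_is W Z" "st W = en W" shows "st Z = en Z"
proof -
  obtain f g where r: "retraction W f g" and i: "isomorphic (retract W f g) Z"
    using assms unfolding prune_is_def by auto
  obtain p q where "morphism (retract W f g) Z p q" using i unfolding isomorphic_def by auto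
  then show ?thesis using r assms(2) unfolding morphism_def retraction_def retract_def by auto
qed

lemma prune_self:
  assumes "pruned X" shows "prune_is X X"
proof -
  have "retraction X id id" unfolding retraction_def morphism_def by auto
  moreover have "retract X id id = X" unfolding retract_def by simp
  moreover have "isomorphic X X" unfolding isomorphic_def morphism_def
    by (rule exI[of _ id], rule exI[of _ id]) auto
  ultimately show ?thesis using assms unfolding prune_is_def by metis
qed

lemma tplus_id: "st X = en X \<Longrightarrow> tplus X = X" unfolding tplus_def by simp
lemma tstar_id: "st X = en X \<Longrightarrow> tstar X = X" unfolding tstar_def by simp

lemma mult_fwd:
  fixes X :: "(nat, nat, 's) stree"
  assumes T: "T1 X" and se: "st X = en X"
  shows "prune_is (tmult X X) X"
proof -
  define W where "W = tmult X X"
  define f :: "nat + nat \<Rightarrow> nat + nat" where "f = case_sum Inl Inl"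
  define R where "R = retract W f f"
  have tr: "is_tree X" and pr: "pruned X" using T unfolding T1_def by auto
  have vX: "\<forall>e\<in>edges X. src X e \<in> verts X \<and> tgt X e \<in> verts X" using tr unfolding is_tree_def by auto
  have stX: "st X \<in> verts X" using tr unfolding is_tree_def by auto
  have W: "verts W = Inl ` verts X \<union> Inr ` (verts X - {st X})" "edges W = Inl ` edges X \<union> Inr ` edges X"
    "\<And>e. src W (Inl e) = Inl (src X e)" "\<And>e. tgt W (Inl e) = Inl (tgt X e)"
    "\<And>e. src W (Inr e) = (if src X e = st X then Inl (st X) else Inr (src X e))"
    "\<And>e. tgt W (Inr e) = (if tgt X e = st X then Inl (st X) else Inr (tgt X e))"
    "\<And>e. lab W (Inl e) = lab X e" "\<And>e. lab W (Inr e) = lab X e"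
    "st W = Inl (st X)" "en W = Inl (st X)"
    unfolding W_def tmult_def Let_def using se by auto
  have ret: "retraction W f f"
    unfolding retraction_def morphism_def f_def
    using W vX by (auto simp: image_subset_iff split: sum.splits if_splits)
  have R: "verts R = Inl ` verts X" "edges R = Inl ` edges X" "src R = src W" "tgt R = tgt W" "lab R = lab W"
    "st R = st W" "en R = en W"
    unfolding R_def retract_def using W stX by (auto simp: f_def image_Un image_image)
  have m1: "morphism X R Inl Inl" unfolding morphism_def using R W se by auto
  have m2: "morphism R X projl projl" unfolding morphism_def using R W se by auto
  have "pruned R"
    by (rule pruned_transfer[OF pr m1 m2]) (auto simp: R)
  moreover have "isomorphic R X"
    unfolding isomorphic_def
  proof (intro exI conjI)
    show "morphism R X projl projl" by (rule m2)
    show "bij_betw projl (verts R) (verts X)" unfolding R bij_betw_def inj_on_def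
      by (auto simp: image_image)
    show "bij_betw projl (edges R) (edges X)" unfolding R bij_betw_def inj_on_def
      by (auto simp: image_image)
  qed
  ultimately have "retraction W f f \<and> pruned (retract W f f) \<and> isomorphic (retract W f f) X"
    using ret unfolding R_def by simp
  then show ?thesis unfolding prune_is_def W_def[symmetric] by blast
qed

lemma mult_bwd:
  fixes X :: "(nat, nat, 's) stree"
  assumes T: "T1 X" and p: "prune_is (tmult X X) X"
  shows "st X = en X"
proof -
  define W where "W = tmult X X"
  obtain f g where r: "retraction W f g" and i: "isomorphic (retract W f g) X"
    using p unfolding prune_is_def W_def by auto
  obtain p q where mp: "morphism (retract W f g) X p q" using i unfolding isomorphic_def by auto
  have tr: "is_tree X" using T unfolding T1_def by auto
  have sx: "(st X, en X) \<in> (dir_adj X)\<^sup>*" using tr unfolding is_tree_def by blast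
  obtain d where d: "dw X (st X) d (en X)" using dw_rtr[OF sx] by blast
  obtain h :: "nat \<Rightarrow> int" where h: "\<forall>e\<in>edges X. h (tgt X e) = h (src X e) + 1"
    using tree_potential[OF tr] by blast
  have "dw W (Inl (st X)) d (Inl (en X))" using dw_inl[OF d] unfolding W_def .
  moreover have "dw W (Inl (en X)) d (if en X = st X then Inl (en X) else Inr (en X))"
    using dw_inr[OF d, of X] unfolding W_def by simp
  ultimately have w0: "dw W (Inl (st X)) (d+d) (if en X = st X then Inl (en X) else Inr (en X))" by (rule dw_app)
  have ew: "en W = (if en X = st X then Inl (en X) else Inr (en X))"
    unfolding W_def tmult_def Let_def by simp
  have sw: "st W = Inl (st X)" unfolding W_def tmult_def Let_def by simp
  have w: "dw W (st W) (d+d) (en W)" unfolding ew sw by (rule w0)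
  have fs: "f (st W) = st W" "f (en W) = en W" using r unfolding retraction_def morphism_def by auto
  have rs: "st (retract W f g) = st W" "en (retract W f g) = en W" unfolding retract_def by simp_all
  have wR: "dw (retract W f g) (st (retract W f g)) (d+d) (en (retract W f g))"
    using dw_morph[OF retraction_morph[OF r] w] unfolding fs rs .
  have "dw X (p (st (retract W f g))) (d+d) (p (en (retract W f g)))"
    by (rule dw_morph[OF mp wR])
  moreover have "p (st (retract W f g)) = st X" "p (en (retract W f g)) = en X"
    using mp unfolding morphism_def by auto
  ultimately have "dw X (st X) (d+d) (en X)" by simp
  from dw_pot[OF this h] dw_pot[OF d h] have "d = 0" by simp
  with d have "dw X (st X) 0 (en X)" by simp
  then show ?thesis by (rule dw_zero)
qed

theorem proposition4p8:
  fixes X :: "(nat, nat, 's) stree"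
  assumes "T1 X"
  shows "(st X = en X \<longleftrightarrow> prune_is (tmult X X) X)
       \<and> (st X = en X \<longleftrightarrow> prune_is (tplus X) X)
       \<and> (st X = en X \<longleftrightarrow> (\<exists>Y :: (nat, nat, 's) stree. T1 Y \<and> prune_is (tplus Y) X))
       \<and> (st X = en X \<longleftrightarrow> prune_is (tstar X) X)
       \<and> (st X = en X \<longleftrightarrow> (\<exists>Y :: (nat, nat, 's) stree. T1 Y \<and> prune_is (tstar Y) X))"
proof -
  have pr: "pruned X" using assms unfolding T1_def by auto
  have a: "\<And>Y::(nat,nat,'s) stree. prune_is (tplus Y) X \<Longrightarrow> st X = en X"
    by (rule prune_st_en) (auto simp: tplus_def)
  have b: "\<And>Y::(nat,nat,'s) stree. prune_is (tstar Y) X \<Longrightarrow> st X = en X"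
    by (rule prune_st_en) (auto simp: tstar_def)
  have c: "st X = en X \<Longrightarrow> prune_is (tplus X) X" using prune_self[OF pr] tplus_id[of X] by simp
  have d: "st X = en X \<Longrightarrow> prune_is (tstar X) X" using prune_self[OF pr] tstar_id[of X] by simp
  have 1: "st X = en X \<longleftrightarrow> prune_is (tmult X X) X" using mult_fwd[OF assms] mult_bwd[OF assms] by blast
  have 2: "st X = en X \<longleftrightarrow> prune_is (tplus X) X" using a c by blast
  have 3: "st X = en X \<longleftrightarrow> (\<exists>Y :: (nat, nat, 's) stree. T1 Y \<and> prune_is (tplus Y) X)"
  proof
    assume "st X = en X" then show "\<exists>Y :: (nat, nat, 's) stree. T1 Y \<and> prune_is (tplus Y) X" using c assms by blast
  next
    assume "\<exists>Y :: (nat, nat, 's) stree. T1 Y \<and> prune_is (tplus Y) X" then show "st X = en X" using a by blast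
  qed
  have 4: "st X = en X \<longleftrightarrow> prune_is (tstar X) X" using b d by blast
  have 5: "st X = en X \<longleftrightarrow> (\<exists>Y :: (nat, nat, 's) stree. T1 Y \<and> prune_is (tstar Y) X)"
  proof
    assume "st X = en X" then show "\<exists>Y :: (nat, nat, 's) stree. T1 Y \<and> prune_is (tstar Y) X" using d assms by blast
  next
    assume "\<exists>Y :: (nat, nat, 's) stree. T1 Y \<and> prune_is (tstar Y) X" then show "st X = en X" using b by blast
  qed
  show ?thesis using 1 2 3 4 5 by (intro conjI)
qed

end
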